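(* Consider Algorithm PDS-SPP described in the context (with an arbitrary vector $v_k$ used in the $x$-update). Suppose that $$\alpha_k^t=1,\quad\|\mathcal A\|^2\le\eta_k^{t-1}q_k^t\quad\text{for all }t\ge2,\ k\ge1,$$ $$\beta_kT_{k-1}\alpha_k^1=\beta_{k-1}T_k,\quad\alpha_k^1\|\mathcal A\|^2\le\eta_{k-1}^{T_{k-1}}q_k^1\quad\text{for all }k\ge2.$$ Let $$B=\sum_{k=1}^N\frac{\beta_k}{T_k}\sum_{t=1}^{T_k}\big[\langle\mathcal A^\top z_k^t-\mathcal A^\top z,x_k^t-\tilde u_k^t\rangle+q_k^tU(z_k^{t-1},z_k^t)+\eta_k^tV(x_k^{t-1},x_k^t)\big].$$ Then for every $z\in\mathcal Z$, $$B\ge-\frac{\beta_N}{T_N}\|\mathcal A\|\,|z_N-z|\,\|x_N-x_N^{T_N-1}\|+\frac{\beta_N\eta_N^{T_N}}{2T_N}\|x_N^{T_N-1}-x_N^{T_N}\|^2.$$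
   Context: Setting. $\mathcal X$ closed convex subset of a finite-dimensional space with norm $\|\cdot\|$; $\mathcal Z$ closed convex subset of a finite-dimensional space with norm $|\cdot|$; $\mathcal A$ linear with $\|\mathcal A\|:=\sup\{\langle\mathcal Ax,z\rangle:\|x\|\le1,|z|\le1\}$; $h$ convex on $\mathcal Z$; $\mu\ge0$; $\nu$ $1$-strongly convex on $\mathcal X$ w.r.t. $\|\cdot\|$; $\zeta$ $1$-strongly convex on $\mathcal Z$ w.r.t. $|\cdot|$; $U(\hat z,z)=\zeta(z)-\zeta(\hat z)-\langle\zeta'(\hat z),z-\hat z\rangle$, $V(\hat x,x)=\nu(x)-\nu(\hat x)-\langle\nu'(\hat x),x-\hat x\rangle$. Algorithm: $x_0\in\mathcal X$, $z_0\in\mathcal Z$; for $k=1,\dots,N$, with some vector $v_k$ and positive integer $T_k$: $x_k^0=x_{k-1}$, $z_k^0=z_{k-1}$, $x_k^{-1}=x_{k-1}^{T_{k-1}-1}$ ($x_1^{-1}=x_0$); for $t=1,\dots,T_k$: $\tilde u_k^t=x_k^{t-1}+\alpha_k^t(x_k^{t-1}-x_k^{t-2})$, $z_k^t=\arg\min_{z\in\mathcal Z}h(z)+\langle-\mathcal A\tilde u_k^t,z\rangle+q_k^tU(z_k^{t-1},z)$, $x_k^t=\arg\min_{x\in\mathcal X}\mu\nu(x)+\langle v_k+\mathcal A^\top z_k^t,x\rangle+\eta_k^tV(x_k^{t-1},x)+p_kV(x_{k-1},x)$; $x_k=x_k^{T_k}$, $z_k=z_k^{T_k}$. Parameters: positive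 $\beta_k,q_k^t,\eta_k^t,p_k$, nonnegative $\alpha_k^t$. *)

theory Defs
  imports "HOL-Analysis.Analysis"
begin

definition is_norm :: "('a::real_vector \<Rightarrow> real) \<Rightarrow> bool" where
  "is_norm n \<longleftrightarrow> (\<forall>x. 0 \<le> n x) \<and> (\<forall>x. n x = 0 \<longleftrightarrow> x = 0)
     \<and> (\<forall>c x. n (c *\<^sub>R x) = \<bar>c\<bar> * n x) \<and> (\<forall>x y. n (x + y) \<le> n x + n y)"

definition op_norm :: "('a::real_inner \<Rightarrow> 'b::real_inner) \<Rightarrow> ('a \<Rightarrow> real) \<Rightarrow> ('b \<Rightarrow> real) \<Rightarrow> real" where
  "op_norm A nx nz = Sup {inner (A x) z | x z. nx x \<le> 1 \<and> nz z \<le> 1}"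

definition strongly_convex_wrt :: "('a::real_vector \<Rightarrow> real) \<Rightarrow> 'a set \<Rightarrow> ('a \<Rightarrow> real) \<Rightarrow> bool" where
  "strongly_convex_wrt n S f \<longleftrightarrow> (\<forall>x\<in>S. \<forall>y\<in>S. \<forall>l::real. 0 \<le> l \<and> l \<le> 1 \<longrightarrow>
      f ((1 - l) *\<^sub>R x + l *\<^sub>R y) \<le> (1 - l) * f x + l * f y - (1/2) * l * (1 - l) * (n (x - y))\<^sup>2)"

definition bregman :: "('a::real_inner \<Rightarrow> real) \<Rightarrow> ('a \<Rightarrow> 'a) \<Rightarrow> 'a \<Rightarrow> 'a \<Rightarrow> real" where
  "bregman f f' xh x = f x - f xh - inner (f' xh) (x - xh)"

end

theory Submission
  imports Defs
begin


lemma isn_neg: assumes "is_norm n" shows "n (- x) = n x"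
proof -
  have "n ((-1) *\<^sub>R x) = \<bar>-1\<bar> * n x" using assms unfolding is_norm_def by blast
  thus ?thesis by simp
qed

lemma isn_0: assumes "is_norm n" shows "n 0 = 0"
  using assms unfolding is_norm_def by blast

lemma isn_sum: assumes "is_norm n" "finite S" shows "n (sum f S) \<le> (\<Sum>i\<in>S. n (f i))"
  using assms(2)
proof (induction S rule: finite_induct)
  case empty then show ?case using isn_0[OF assms(1)] by simp
next
  case (insert a F)
  have "n (f a + sum f F) \<le> n (f a) + n (sum f F)" using assms(1) unfolding is_norm_def by blast
  with insert show ?case by simp
qed

lemma isn_upper:
  fixes n :: "'a::euclidean_space \<Rightarrow> real"
  assumes "is_norm n" shows "\<exists>C. \<forall>x. n x \<le> C * norm x"
proof -
  have "n x \<le> (\<Sum>b\<in>Basis. n b) * norm x" for x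
  proof -
    have "n x = n (\<Sum>b\<in>Basis. (x \<bullet> b) *\<^sub>R b)" by (simp add: euclidean_representation)
    also have "\<dots> \<le> (\<Sum>b\<in>Basis. n ((x \<bullet> b) *\<^sub>R b))" by (rule isn_sum[OF assms]) simp
    also have "\<dots> = (\<Sum>b\<in>Basis. \<bar>x \<bullet> b\<bar> * n b)" using assms unfolding is_norm_def by simp
    also have "\<dots> \<le> (\<Sum>b\<in>Basis. norm x * n b)"
      apply (rule sum_mono) apply (rule mult_right_mono)
      using Basis_le_norm assms unfolding is_norm_def by auto
    also have "\<dots> = (\<Sum>b\<in>Basis. n b) * norm x" by (simp add: sum_distrib_left mult.commute)
    finally show ?thesis .
  qed
  thus ?thesis by blast
qed

lemma isn_lower:
  fixes n :: "'a::euclidean_space \<Rightarrow> real"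
  assumes "is_norm n" shows "\<exists>c>0. \<forall>x. c * norm x \<le> n x"
proof -
  obtain C where C: "\<And>x. n x \<le> C * norm x" using isn_upper[OF assms] by blast
  have tri: "n (x + y) \<le> n x + n y" for x y using assms unfolding is_norm_def by blast
  have lip: "\<bar>n x - n y\<bar> \<le> C * dist x y" for x y
  proof -
    have "n x \<le> n y + n (x - y)" using tri[of y "x - y"] by simp
    moreover have "n y \<le> n x + n (y - x)" using tri[of x "y - x"] by simp
    moreover have "n (y - x) = n (x - y)" using isn_neg[OF assms, of "x - y"] by simp
    moreover have "n (x - y) \<le> C * dist x y" using C[of "x - y"] by (simp add: dist_norm)
    ultimately show ?thesis by linarith
  qed
  have cont: "continuous_on (sphere 0 1) n"
  proof (rule continuous_at_imp_continuous_on, intro ballI)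
    fix x :: 'a
    show "isCont n x"
    proof (rule continuous_at_eps_delta[THEN iffD2], intro allI impI)
      fix e :: real assume e: "e > 0"
      show "\<exists>d>0. \<forall>y. dist y x < d \<longrightarrow> dist (n y) (n x) < e"
      proof (intro exI[of _ "e / (\<bar>C\<bar> + 1)"] conjI allI impI)
        show "e / (\<bar>C\<bar> + 1) > 0" using e by simp
        fix y assume "dist y x < e / (\<bar>C\<bar> + 1)"
        hence "(\<bar>C\<bar> + 1) * dist y x < e" by (simp add: field_simps)
        moreover have "dist (n y) (n x) \<le> C * dist y x" using lip[of y x] by (simp add: dist_real_def)
        moreover have "C * dist y x \<le> (\<bar>C\<bar> + 1) * dist y x"
          by (rule mult_right_mono) auto
        ultimately show "dist (n y) (n x) < e" by linarith
      qed
    qed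
  qed
  obtain b :: 'a where b: "b \<in> Basis" using nonempty_Basis by blast
  have ne: "sphere (0::'a) 1 \<noteq> {}" using b norm_Basis[OF b] unfolding sphere_def by (metis (mono_tags) dist_0_norm empty_iff mem_Collect_eq)
  obtain m where m: "m \<in> sphere (0::'a) 1" "\<And>y. y \<in> sphere 0 1 \<Longrightarrow> n m \<le> n y"
    using continuous_attains_inf[OF compact_sphere ne cont] by blast
  have mpos: "n m > 0"
  proof -
    have "m \<noteq> 0" using m(1) by auto
    hence "n m \<noteq> 0" using assms unfolding is_norm_def by blast
    moreover have "n m \<ge> 0" using assms unfolding is_norm_def by blast
    ultimately show ?thesis by simp
  qed
  have "n m * norm x \<le> n x" for x
  proof (cases "x = 0")
    case True then show ?thesis using isn_0[OF assms] by simp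
  next
    case False
    hence nx: "norm x > 0" by simp
    have "(1 / norm x) *\<^sub>R x \<in> sphere 0 1" using nx by (simp add: norm_divide)
    hence "n m \<le> n ((1 / norm x) *\<^sub>R x)" by (rule m(2))
    also have "\<dots> = n x / norm x" using assms unfolding is_norm_def by simp
    finally show ?thesis using nx by (simp add: field_simps)
  qed
  thus ?thesis using mpos by blast
qed

lemma opn_bound:
  fixes A :: "'a::euclidean_space \<Rightarrow> 'b::euclidean_space"
  assumes nX: "is_norm nX" and nZ: "is_norm nZ" and A: "linear A"
  shows "inner (A x) w \<le> op_norm A nX nZ * nX x * nZ w"
proof -
  let ?S = "{inner (A x) z | x z. nX x \<le> 1 \<and> nZ z \<le> 1}"
  obtain cx where cx: "cx > 0" "\<And>x. cx * norm x \<le> nX x" using isn_lower[OF nX] by blast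
  obtain cz where cz: "cz > 0" "\<And>x. cz * norm x \<le> nZ x" using isn_lower[OF nZ] by blast
  obtain K where K: "K > 0" "\<And>x. norm (A x) \<le> norm x * K"
    using bounded_linear.pos_bounded[OF linear_conv_bounded_linear[THEN iffD1, OF A]] by blast
  have bdd: "bdd_above ?S"
  proof (rule bdd_aboveI, clarify)
    fix a b assume a: "nX a \<le> 1" and b: "nZ b \<le> 1"
    have na: "norm a \<le> 1 / cx" using cx(2)[of a] a cx(1) by (simp add: field_simps)
    have nb: "norm b \<le> 1 / cz" using cz(2)[of b] b cz(1) by (simp add: field_simps)
    have "inner (A a) b \<le> norm (A a) * norm b" by (rule norm_cauchy_schwarz)
    also have "\<dots> \<le> (norm a * K) * norm b" by (rule mult_right_mono[OF K(2)]) simp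
    also have "\<dots> \<le> (1 / cx * K) * (1 / cz)"
      apply (rule mult_mono) using na nb K(1) cx cz mult_right_mono[OF na, of K] by auto
    finally show "inner (A a) b \<le> K / (cx * cz)" by simp
  qed
  show ?thesis
  proof (cases "x = 0 \<or> w = 0")
    case True then show ?thesis using isn_0[OF nX] isn_0[OF nZ] linear_0[OF A] by auto
  next
    case False
    have px: "nX x > 0" using False nX unfolding is_norm_def by (metis less_eq_real_def)
    have pw: "nZ w > 0" using False nZ unfolding is_norm_def by (metis less_eq_real_def)
    have "nX ((1 / nX x) *\<^sub>R x) = \<bar>1 / nX x\<bar> * nX x" using nX unfolding is_norm_def by blast
    hence "nX ((1 / nX x) *\<^sub>R x) = 1" using px by simp
    moreover have "nZ ((1 / nZ w) *\<^sub>R w) = \<bar>1 / nZ w\<bar> * nZ w" using nZ unfolding is_norm_def by blast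
    hence "nZ ((1 / nZ w) *\<^sub>R w) = 1" using pw by simp
    ultimately have "inner (A ((1 / nX x) *\<^sub>R x)) ((1 / nZ w) *\<^sub>R w) \<in> ?S" by fastforce
    hence "inner (A ((1 / nX x) *\<^sub>R x)) ((1 / nZ w) *\<^sub>R w) \<le> op_norm A nX nZ"
      unfolding op_norm_def by (rule cSup_upper[OF _ bdd])
    hence "inner (A x) w / (nZ w * nX x) \<le> op_norm A nX nZ"
      by (simp add: linear_scale[OF A] inner_scaleR_left)
    thus ?thesis using px pw by (simp add: field_simps)
  qed
qed


lemma breg_lb:
  fixes f :: "'a::real_inner \<Rightarrow> real"
  assumes sc: "strongly_convex_wrt n S f" and n: "is_norm n"
    and sub: "\<forall>xh\<in>S. \<forall>y\<in>S. f y \<ge> f xh + inner (f' xh) (y - xh)"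
    and S: "convex S" and a: "a \<in> S" and b: "b \<in> S"
  shows "bregman f f' a b \<ge> 1/2 * (n (b - a))\<^sup>2"
proof -
  define B where "B = bregman f f' a b"
  define m where "m = (n (a - b))\<^sup>2"
  have nab: "n (b - a) = n (a - b)" using isn_neg[OF n, of "a - b"] by simp
  have key: "l * B \<ge> l * (1 - l) / 2 * m" if l: "0 \<le> l" "l \<le> 1" for l
  proof -
    have "f ((1 - l) *\<^sub>R a + l *\<^sub>R b) \<le> (1 - l) * f a + l * f b - (1/2) * l * (1 - l) * m"
      using sc a b l unfolding strongly_convex_wrt_def m_def by blast
    moreover have "(1 - l) *\<^sub>R a + l *\<^sub>R b \<in> S" using S a b l by (simp add: convex_def)
    hence "f ((1 - l) *\<^sub>R a + l *\<^sub>R b) \<ge> f a + inner (f' a) ((1 - l) *\<^sub>R a + l *\<^sub>R b - a)"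
      using sub a by blast
    moreover have "(1 - l) *\<^sub>R a + l *\<^sub>R b - a = l *\<^sub>R (b - a)" by (simp add: algebra_simps)
    ultimately have "f a + l * inner (f' a) (b - a) \<le> (1 - l) * f a + l * f b - (1/2) * l * (1 - l) * m"
      by simp
    thus ?thesis unfolding B_def bregman_def by (simp add: algebra_simps)
  qed
  have "B \<ge> m / 2"
  proof (rule ccontr)
    assume c: "\<not> B \<ge> m / 2"
    have m0: "m \<ge> 0" unfolding m_def by simp
    show False
    proof (cases "B \<ge> - m / 2")
      case True
      define l where "l = (m / 2 - B) / m"
      have mp: "m > 0" using c True by linarith
      have l0: "l > 0" "l \<le> 1" using c True mp unfolding l_def by (auto simp: field_simps)
      have "l * ((1 - l) / 2 * m) \<le> l * B" using key[of l] l0 by (simp add: algebra_simps)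
      hence "B \<ge> (1 - l) / 2 * m" using l0 mult_le_cancel_left_pos by blast
      moreover have "(1 - l) / 2 * m = m / 4 + B / 2" unfolding l_def using mp by (simp add: field_simps)
      ultimately show False using c by linarith
    next
      case False
      have "1 * B \<ge> 1 * (1 - 1) / 2 * m" using key[of 1] by simp
      thus False using False m0 by simp
    qed
  qed
  thus ?thesis unfolding B_def m_def nab by simp
qed

lemma young: fixes q L al a b :: real assumes "q > 0"
  shows "- (al * L * a * b) \<ge> - (q / 2 * b\<^sup>2 + al\<^sup>2 * L\<^sup>2 / (2 * q) * a\<^sup>2)"
proof -
  have "0 \<le> (q * b - al * L * a)\<^sup>2" by simp
  hence "2 * q * (al * L * a * b) \<le> q\<^sup>2 * b\<^sup>2 + al\<^sup>2 * L\<^sup>2 * a\<^sup>2" by (simp add: power2_eq_square algebra_simps)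
  hence "al * L * a * b \<le> (q\<^sup>2 * b\<^sup>2 + al\<^sup>2 * L\<^sup>2 * a\<^sup>2) / (2 * q)" using assms by (simp add: field_simps)
  also have "\<dots> = q / 2 * b\<^sup>2 + al\<^sup>2 * L\<^sup>2 / (2 * q) * a\<^sup>2" using assms by (simp add: field_simps power2_eq_square)
  finally show ?thesis by simp
qed


theorem lemma5p4:
  fixes X :: "'a::euclidean_space set" and Z :: "'b::euclidean_space set"
    and nX :: "'a \<Rightarrow> real" and nZ :: "'b \<Rightarrow> real"
    and A :: "'a \<Rightarrow> 'b" and h :: "'b \<Rightarrow> real" and \<mu> :: real
    and \<nu> :: "'a \<Rightarrow> real" and \<nu>' :: "'a \<Rightarrow> 'a"
    and \<zeta> :: "'b \<Rightarrow> real" and \<zeta>' :: "'b \<Rightarrow> 'b"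
    and N :: nat and T :: "nat \<Rightarrow> nat"
    and \<beta> p :: "nat \<Rightarrow> real" and q \<eta> \<alpha> :: "nat \<Rightarrow> nat \<Rightarrow> real"
    and v :: "nat \<Rightarrow> 'a"
    and x0 :: 'a and z0 :: 'b
    and x u :: "nat \<Rightarrow> nat \<Rightarrow> 'a" and zz :: "nat \<Rightarrow> nat \<Rightarrow> 'b"
    and z :: 'b
  assumes X: "closed X" "convex X" and Zs: "closed Z" "convex Z"
    and nX: "is_norm nX" and nZ: "is_norm nZ"
    and A: "linear A"
    and h: "convex_on Z h"
    and mu: "\<mu> \<ge> 0"
    and nu: "strongly_convex_wrt nX X \<nu>"
    and nu': "\<forall>xh\<in>X. \<forall>y\<in>X. \<nu> y \<ge> \<nu> xh + inner (\<nu>' xh) (y - xh)"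
    and zeta: "strongly_convex_wrt nZ Z \<zeta>"
    and zeta': "\<forall>zh\<in>Z. \<forall>y\<in>Z. \<zeta> y \<ge> \<zeta> zh + inner (\<zeta>' zh) (y - zh)"
    and N: "N \<ge> 1"
    and T: "\<forall>k\<in>{1..N}. T k \<ge> 1"
    and pos: "\<forall>k\<in>{1..N}. \<beta> k > 0 \<and> p k > 0"
    and pos2: "\<forall>k\<in>{1..N}. \<forall>t\<in>{1..T k}. q k t > 0 \<and> \<eta> k t > 0 \<and> \<alpha> k t \<ge> 0"
    and x0: "x0 \<in> X" and z0: "z0 \<in> Z"
    and init1: "x 1 0 = x0" "zz 1 0 = z0"
    and initk: "\<forall>k\<in>{2..N}. x k 0 = x (k-1) (T (k-1)) \<and> zz k 0 = zz (k-1) (T (k-1))"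
    and u1: "\<forall>k\<in>{1..N}. u k 1 = x k 0 + \<alpha> k 1 *\<^sub>R (x k 0 - (if k = 1 then x0 else x (k-1) (T (k-1) - 1)))"
    and ut: "\<forall>k\<in>{1..N}. \<forall>t\<in>{2..T k}. u k t = x k (t-1) + \<alpha> k t *\<^sub>R (x k (t-1) - x k (t-2))"
    and zupd: "\<forall>k\<in>{1..N}. \<forall>t\<in>{1..T k}. zz k t \<in> Z \<and> (\<forall>w\<in>Z.
        h (zz k t) + inner (- A (u k t)) (zz k t) + q k t * bregman \<zeta> \<zeta>' (zz k (t-1)) (zz k t)
        \<le> h w + inner (- A (u k t)) w + q k t * bregman \<zeta> \<zeta>' (zz k (t-1)) w)"
    and xupd: "\<forall>k\<in>{1..N}. \<forall>t\<in>{1..T k}. x k t \<in> X \<and> (\<forall>y\<in>X.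
        \<mu> * \<nu> (x k t) + inner (v k + adjoint A (zz k t)) (x k t) + \<eta> k t * bregman \<nu> \<nu>' (x k (t-1)) (x k t)
          + p k * bregman \<nu> \<nu>' (if k = 1 then x0 else x (k-1) (T (k-1))) (x k t)
        \<le> \<mu> * \<nu> y + inner (v k + adjoint A (zz k t)) y + \<eta> k t * bregman \<nu> \<nu>' (x k (t-1)) y
          + p k * bregman \<nu> \<nu>' (if k = 1 then x0 else x (k-1) (T (k-1))) y)"
    and alpha1: "\<forall>k\<in>{1..N}. \<forall>t\<in>{2..T k}. \<alpha> k t = 1"
    and stepA: "\<forall>k\<in>{1..N}. \<forall>t\<in>{2..T k}. (op_norm A nX nZ)\<^sup>2 \<le> \<eta> k (t-1) * q k t"
    and beta: "\<forall>k\<in>{2..N}. \<beta> k * real (T (k-1)) * \<alpha> k 1 = \<beta> (k-1) * real (T k)"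
    and stepA1: "\<forall>k\<in>{2..N}. \<alpha> k 1 * (op_norm A nX nZ)\<^sup>2 \<le> \<eta> (k-1) (T (k-1)) * q k 1"
    and z: "z \<in> Z"
  shows "(\<Sum>k=1..N. \<beta> k / real (T k) * (\<Sum>t=1..T k.
            inner (adjoint A (zz k t) - adjoint A z) (x k t - u k t)
            + q k t * bregman \<zeta> \<zeta>' (zz k (t-1)) (zz k t)
            + \<eta> k t * bregman \<nu> \<nu>' (x k (t-1)) (x k t)))
       \<ge> - (\<beta> N / real (T N)) * op_norm A nX nZ * nZ (zz N (T N) - z) * nX (x N (T N) - x N (T N - 1))
         + \<beta> N * \<eta> N (T N) / (2 * real (T N)) * (nX (x N (T N - 1) - x N (T N)))\<^sup>2"
proof -
  define L where "L = op_norm A nX nZ"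
  define xp where "xp k = (if k = 1 then x0 else x (k-1) (T (k-1) - 1))" for k
  define D where "D k t = (if t = 0 then x k 0 - xp k else x k t - x k (t-1))" for k t
  define P where "P k t = inner (A (D k t)) (zz k t - z)" for k t
  define E where "E k t = \<eta> k t / 2 * (nX (D k t))\<^sup>2" for k t
  define F where "F k t = P k t + E k t" for k t
  define w where "w k = \<beta> k / real (T k)" for k
  define tm where "tm k t = inner (adjoint A (zz k t) - adjoint A z) (x k t - u k t)
            + q k t * bregman \<zeta> \<zeta>' (zz k (t-1)) (zz k t)
            + \<eta> k t * bregman \<nu> \<nu>' (x k (t-1)) (x k t)" for k t
  define R where "R k = \<alpha> k 1 * P k 0 + (\<alpha> k 1)\<^sup>2 * L\<^sup>2 / (2 * q k 1) * (nX (D k 0))\<^sup>2" for k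
  define G where "G k = w k * F k (T k)" for k
  have memX: "x k t \<in> X" if "k \<in> {1..N}" "t \<le> T k" for k t
  proof (cases "t = 0")
    case False then show ?thesis using xupd that by auto
  next
    case True
    show ?thesis
    proof (cases "k = 1")
      case True then show ?thesis using \<open>t = 0\<close> init1 x0 by simp
    next
      case False
      hence "k - 1 \<in> {1..N}" "k \<in> {2..N}" using that by auto
      then show ?thesis using \<open>t = 0\<close> initk xupd T by fastforce
    qed
  qed
  have memZ: "zz k t \<in> Z" if "k \<in> {1..N}" "t \<le> T k" for k t
  proof (cases "t = 0")
    case False then show ?thesis using zupd that by auto
  next
    case True
    show ?thesis
    proof (cases "k = 1")
      case True then show ?thesis using \<open>t = 0\<close> init1 z0 by simp
    next
      case False
      hence "k - 1 \<in> {1..N}" "k \<in> {2..N}" using that by auto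
      then show ?thesis using \<open>t = 0\<close> initk zupd T by fastforce
    qed
  qed
  have opb: "inner (A a) b \<le> L * nX a * nZ b" for a b
    unfolding L_def by (rule opn_bound[OF nX nZ A])
  have nXneg: "nX (- a) = nX a" for a by (rule isn_neg[OF nX])
  have term_lb: "tm k t \<ge> P k t - \<alpha> k t * P k (t-1) + E k t
      - (\<alpha> k t)\<^sup>2 * L\<^sup>2 / (2 * q k t) * (nX (D k (t-1)))\<^sup>2"
    if k: "k \<in> {1..N}" and t: "t \<in> {1..T k}" for k t
  proof -
    have qp: "q k t > 0" and ep: "\<eta> k t > 0" and ap: "\<alpha> k t \<ge> 0" using pos2 k t by auto
    have xu: "x k t - u k t = D k t - \<alpha> k t *\<^sub>R D k (t-1)"
    proof (cases "t = 1")
      case True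
      have uk: "u k 1 = x k 0 + \<alpha> k 1 *\<^sub>R (x k 0 - xp k)" using u1 k unfolding xp_def by blast
      have d1: "D k 1 = x k 1 - x k 0" and d0: "D k 0 = x k 0 - xp k" unfolding D_def by simp_all
      have "x k 1 - u k 1 = D k 1 - \<alpha> k 1 *\<^sub>R D k 0"
        unfolding uk d1 d0 by (simp add: algebra_simps)
      then show ?thesis using True by simp
    next
      case False
      hence t2: "t \<in> {2..T k}" using t by auto
      hence uk: "u k t = x k (t-1) + \<alpha> k t *\<^sub>R (x k (t-1) - x k (t-2))" using ut k by blast
      have tt: "t - 1 - 1 = t - 2" by simp
      have dt: "D k t = x k t - x k (t-1)" using t unfolding D_def by simp
      have dt1: "D k (t-1) = x k (t-1) - x k (t-2)" using t2 unfolding D_def tt by simp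
      show ?thesis unfolding uk dt dt1 by (simp add: algebra_simps)
    qed
    have adj: "inner (adjoint A a) y = inner (A y) a" for a y
      using adjoint_works[OF A, of y a] by (simp add: inner_commute)
    have lA: "A (D k t - \<alpha> k t *\<^sub>R D k (t-1)) = A (D k t) - \<alpha> k t *\<^sub>R A (D k (t-1))"
      using linear_diff[OF A] linear_scale[OF A] by simp
    have i1: "inner (adjoint A (zz k t) - adjoint A z) (x k t - u k t)
        = P k t - \<alpha> k t * P k (t-1) - \<alpha> k t * inner (A (D k (t-1))) (zz k t - zz k (t-1))"
      unfolding inner_diff_left[symmetric] adj xu P_def lA
      by (simp add: inner_diff_right inner_diff_left adj algebra_simps)
    have ib: "inner (A (D k (t-1))) (zz k t - zz k (t-1)) \<le> L * nX (D k (t-1)) * nZ (zz k t - zz k (t-1))"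
      by (rule opb)
    have ib2: "\<alpha> k t * inner (A (D k (t-1))) (zz k t - zz k (t-1)) \<le> \<alpha> k t * (L * nX (D k (t-1)) * nZ (zz k t - zz k (t-1)))"
      by (rule mult_left_mono[OF ib ap])
    have e1: "\<alpha> k t * (L * nX (D k (t-1)) * nZ (zz k t - zz k (t-1))) = \<alpha> k t * L * nX (D k (t-1)) * nZ (zz k t - zz k (t-1))"
      by (simp only: mult.assoc)
    have y: "- (\<alpha> k t * L * nX (D k (t-1)) * nZ (zz k t - zz k (t-1))) \<ge>
      - (q k t / 2 * (nZ (zz k t - zz k (t-1)))\<^sup>2 + (\<alpha> k t)\<^sup>2 * L\<^sup>2 / (2 * q k t) * (nX (D k (t-1)))\<^sup>2)"
      by (rule young[OF qp])
    have bz: "bregman \<zeta> \<zeta>' (zz k (t-1)) (zz k t) \<ge> 1/2 * (nZ (zz k t - zz k (t-1)))\<^sup>2"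
      by (rule breg_lb[OF zeta nZ zeta' Zs(2)]) (use memZ k t in auto)
    have bz2: "q k t * bregman \<zeta> \<zeta>' (zz k (t-1)) (zz k t) \<ge> q k t * (1/2 * (nZ (zz k t - zz k (t-1)))\<^sup>2)"
      by (rule mult_left_mono[OF bz less_imp_le[OF qp]])
    have e2: "q k t * (1/2 * (nZ (zz k t - zz k (t-1)))\<^sup>2) = q k t / 2 * (nZ (zz k t - zz k (t-1)))\<^sup>2"
      by simp
    have bx: "bregman \<nu> \<nu>' (x k (t-1)) (x k t) \<ge> 1/2 * (nX (x k t - x k (t-1)))\<^sup>2"
      by (rule breg_lb[OF nu nX nu' X(2)]) (use memX k t in auto)
    have bx2: "\<eta> k t * bregman \<nu> \<nu>' (x k (t-1)) (x k t) \<ge> \<eta> k t * (1/2 * (nX (x k t - x k (t-1)))\<^sup>2)"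
      by (rule mult_left_mono[OF bx less_imp_le[OF ep]])
    have e3: "\<eta> k t * (1/2 * (nX (x k t - x k (t-1)))\<^sup>2) = E k t"
      using t unfolding E_def D_def by simp
    have tmeq: "tm k t = P k t - \<alpha> k t * P k (t-1) - \<alpha> k t * inner (A (D k (t-1))) (zz k t - zz k (t-1))
       + q k t * bregman \<zeta> \<zeta>' (zz k (t-1)) (zz k t) + \<eta> k t * bregman \<nu> \<nu>' (x k (t-1)) (x k t)"
      unfolding tm_def i1 ..
    show ?thesis unfolding tmeq using ib2 e1 y bz2 e2 bx2 e3 by linarith
  qed
  have inner_step: "(\<Sum>t=1..m. tm k t) \<ge> F k m - R k"
    if k: "k \<in> {1..N}" and m: "m \<in> {1..T k}" for k m
    using m
  proof (induction m)
    case 0 then show ?case by simp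
  next
    case (Suc m)
    show ?case
    proof (cases "m = 0")
      case True
      then show ?thesis using term_lb[OF k, of 1] Suc.prems unfolding F_def R_def by simp
    next
      case False
      have IH: "(\<Sum>t=1..m. tm k t) \<ge> F k m - R k" using Suc False by auto
      have sm: "Suc m \<in> {2..T k}" using Suc.prems False by auto
      have al: "\<alpha> k (Suc m) = 1" using alpha1 k sm by blast
      have st: "L\<^sup>2 \<le> \<eta> k m * q k (Suc m)" using stepA k sm unfolding L_def by fastforce
      have qp: "q k (Suc m) > 0" using pos2 k Suc.prems by auto
      have "L\<^sup>2 / (2 * q k (Suc m)) \<le> \<eta> k m / 2" using st qp by (simp add: field_simps)
      hence "L\<^sup>2 / (2 * q k (Suc m)) * (nX (D k m))\<^sup>2 \<le> \<eta> k m / 2 * (nX (D k m))\<^sup>2"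
        by (rule mult_right_mono) simp
      moreover have "tm k (Suc m) \<ge> P k (Suc m) - P k m + E k (Suc m) - L\<^sup>2 / (2 * q k (Suc m)) * (nX (D k m))\<^sup>2"
        using term_lb[OF k Suc.prems] al by simp
      moreover have "E k m = \<eta> k m / 2 * (nX (D k m))\<^sup>2" unfolding E_def ..
      ultimately have "tm k (Suc m) \<ge> F k (Suc m) - F k m"
        unfolding F_def by linarith
      then show ?thesis using IH by simp
    qed
  qed
  have outer: "w k * (\<Sum>t=1..T k. tm k t) \<ge> G k - (if k = 1 then 0 else G (k-1))"
    if k: "k \<in> {1..N}" for k
  proof -
    have Tk: "T k \<ge> 1" using T k by auto
    have wp: "w k > 0" using Tk pos k unfolding w_def by (auto intro!: divide_pos_pos)
    have "(\<Sum>t=1..T k. tm k t) \<ge> F k (T k) - R k" using inner_step[OF k, of "T k"] Tk by simp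
    hence a: "w k * (\<Sum>t=1..T k. tm k t) \<ge> G k - w k * R k"
      unfolding G_def using wp mult_left_mono[of "F k (T k) - R k" _ "w k"] by (simp add: right_diff_distrib)
    show ?thesis
    proof (cases "k = 1")
      case True
      have "D k 0 = 0" using True init1 unfolding D_def xp_def by simp
      hence "R k = 0" unfolding R_def P_def using linear_0[OF A] isn_0[OF nX] by simp
      then show ?thesis using a True by simp
    next
      case False
      hence k2: "k \<in> {2..N}" and k1: "k - 1 \<in> {1..N}" using k by auto
      have Tk1: "T (k-1) \<ge> 1" using T k1 by auto
      have x0k: "x k 0 = x (k-1) (T (k-1))" and z0k: "zz k 0 = zz (k-1) (T (k-1))" using initk k2 by auto
      have Dk: "D k 0 = D (k-1) (T (k-1))" using Tk1 False x0k unfolding D_def xp_def by simp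
      have Pk: "P k 0 = P (k-1) (T (k-1))" unfolding P_def Dk z0k ..
      have ap: "\<alpha> k 1 \<ge> 0" and qp: "q k 1 > 0" using pos2 k Tk by auto
      have bp: "\<beta> k > 0" using pos k by auto
      have wa: "w k * \<alpha> k 1 = w (k-1)"
        using beta k2 Tk Tk1 unfolding w_def by (auto simp: field_simps)
      have st: "\<alpha> k 1 * L\<^sup>2 \<le> \<eta> (k-1) (T (k-1)) * q k 1" using stepA1 k2 unfolding L_def by blast
      have "(\<alpha> k 1)\<^sup>2 * L\<^sup>2 / (2 * q k 1) = \<alpha> k 1 * (\<alpha> k 1 * L\<^sup>2 / (2 * q k 1))"
        by (simp add: power2_eq_square)
      also have "\<dots> \<le> \<alpha> k 1 * (\<eta> (k-1) (T (k-1)) / 2)"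
        using st qp ap by (intro mult_left_mono) (auto simp: field_simps)
      finally have c: "(\<alpha> k 1)\<^sup>2 * L\<^sup>2 / (2 * q k 1) * (nX (D k 0))\<^sup>2
          \<le> \<alpha> k 1 * (\<eta> (k-1) (T (k-1)) / 2) * (nX (D k 0))\<^sup>2"
        by (rule mult_right_mono) simp
      have "w k * R k = w k * \<alpha> k 1 * P k 0 + w k * ((\<alpha> k 1)\<^sup>2 * L\<^sup>2 / (2 * q k 1) * (nX (D k 0))\<^sup>2)"
        unfolding R_def by (simp add: algebra_simps)
      also have "\<dots> \<le> w k * \<alpha> k 1 * P k 0 + w k * (\<alpha> k 1 * (\<eta> (k-1) (T (k-1)) / 2) * (nX (D k 0))\<^sup>2)"
        using wp by (intro add_left_mono mult_left_mono[OF c]) simp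
      also have "\<dots> = G (k-1)"
        unfolding G_def F_def E_def Pk Dk using wa by (simp add: algebra_simps)
      finally show ?thesis using a False by simp
    qed
  qed
  have sumk: "(\<Sum>k=1..n. w k * (\<Sum>t=1..T k. tm k t)) \<ge> G n" if "n \<in> {1..N}" for n
    using that
  proof (induction n)
    case 0 then show ?case by simp
  next
    case (Suc n)
    show ?case
    proof (cases "n = 0")
      case True then show ?thesis using outer[of 1] Suc.prems by simp
    next
      case False
      hence "(\<Sum>k=1..n. w k * (\<Sum>t=1..T k. tm k t)) \<ge> G n" using Suc by auto
      moreover have "w (Suc n) * (\<Sum>t=1..T (Suc n). tm (Suc n) t) \<ge> G (Suc n) - G n"
        using outer[OF Suc.prems] False by simp
      ultimately show ?thesis by simp
    qed
  qed
  have TN: "T N \<ge> 1" using T N by auto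
  have wN: "w N > 0" using TN pos N unfolding w_def by (auto intro!: divide_pos_pos)
  have DN: "D N (T N) = x N (T N) - x N (T N - 1)" using TN unfolding D_def by simp
  have mP: "- P N (T N) \<le> L * nX (D N (T N)) * nZ (zz N (T N) - z)"
    using opb[of "- D N (T N)" "zz N (T N) - z"] nXneg linear_neg[OF A] unfolding P_def by simp
  have "w N * P N (T N) \<ge> - (w N * (L * nX (D N (T N)) * nZ (zz N (T N) - z)))"
    using mult_left_mono[OF mP less_imp_le[OF wN]] by simp
  moreover have "nX (x N (T N - 1) - x N (T N)) = nX (D N (T N))"
    using nXneg[of "D N (T N)"] DN by simp
  ultimately have fin: "G N \<ge> - (\<beta> N / real (T N)) * op_norm A nX nZ * nZ (zz N (T N) - z) * nX (x N (T N) - x N (T N - 1))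
         + \<beta> N * \<eta> N (T N) / (2 * real (T N)) * (nX (x N (T N - 1) - x N (T N)))\<^sup>2"
    unfolding G_def F_def E_def w_def L_def DN by (simp add: algebra_simps)
  have "(\<Sum>k=1..N. w k * (\<Sum>t=1..T k. tm k t)) \<ge> G N" using sumk N by simp
  with fin show ?thesis unfolding w_def tm_def by simp
qed

end
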